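(* Let $X$ be a distance-regular graph of diameter $d\geq 2$ on $n$ vertices with degree $k$ and $\mu=c_2$. Let $\gamma,\delta>0$. If $k>\gamma n$ and $\mu\leq(1-\delta)k$, then $\mathrm{motion}(X)\geq\gamma\delta n$.
   Context: A connected graph $X$ of diameter $d$ is distance-regular if there are integers $a_i,b_i,c_i$ ($0\le i\le d$) such that for all vertices $v,w$ with $\mathrm{dist}(v,w)=i$, $w$ has exactly $c_i$ neighbours at distance $i-1$, $a_i$ at distance $i$, $b_i$ at distance $i+1$ from $v$; $X$ is $k$-regular with $k=b_0$, and $\mu=c_2$. The motion $\mathrm{motion}(X)$ is the minimum, over non-identity automorphisms of $X$, of the number of vertices not fixed by the automorphism. *)

theory Defs
  imports Main "HOL-Library.Extended_Nat"
begin

definition simple_graph :: "'a set \<Rightarrow> ('a \<Rightarrow> 'a \<Rightarrow> bool) \<Rightarrow> bool" where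
  "simple_graph V E \<longleftrightarrow> finite V \<and> (\<forall>u v. E u v \<longrightarrow> u \<in> V \<and> v \<in> V)
     \<and> (\<forall>u v. E u v \<longrightarrow> E v u) \<and> (\<forall>u. \<not> E u u)"

text \<open>Walks of length m correspond to the m-th relational power of E.\<close>
definition connected_graph :: "'a set \<Rightarrow> ('a \<Rightarrow> 'a \<Rightarrow> bool) \<Rightarrow> bool" where
  "connected_graph V E \<longleftrightarrow> (\<forall>u\<in>V. \<forall>v\<in>V. \<exists>m. (E ^^ m) u v)"

definition gdist :: "('a \<Rightarrow> 'a \<Rightarrow> bool) \<Rightarrow> 'a \<Rightarrow> 'a \<Rightarrow> nat" where
  "gdist E u v = (LEAST m. (E ^^ m) u v)"

definition diameter :: "'a set \<Rightarrow> ('a \<Rightarrow> 'a \<Rightarrow> bool) \<Rightarrow> nat" where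
  "diameter V E = Max {gdist E u v | u v. u \<in> V \<and> v \<in> V}"

definition distance_regular_with ::
  "'a set \<Rightarrow> ('a \<Rightarrow> 'a \<Rightarrow> bool) \<Rightarrow> (nat \<Rightarrow> nat) \<Rightarrow> (nat \<Rightarrow> nat) \<Rightarrow> (nat \<Rightarrow> nat) \<Rightarrow> bool" where
  "distance_regular_with V E a b c \<longleftrightarrow>
     simple_graph V E \<and> V \<noteq> {} \<and> connected_graph V E \<and>
     (\<forall>v\<in>V. \<forall>w\<in>V. let i = gdist E v w in
        card {u\<in>V. E w u \<and> gdist E v u + 1 = i} = c i \<and>
        card {u\<in>V. E w u \<and> gdist E v u = i} = a i \<and>
        card {u\<in>V. E w u \<and> gdist E v u = i + 1} = b i)"

definition is_automorphism :: "'a set \<Rightarrow> ('a \<Rightarrow> 'a \<Rightarrow> bool) \<Rightarrow> ('a \<Rightarrow> 'a) \<Rightarrow> bool" where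
  "is_automorphism V E \<sigma> \<longleftrightarrow> bij_betw \<sigma> V V \<and> (\<forall>u\<in>V. \<forall>v\<in>V. E u v \<longleftrightarrow> E (\<sigma> u) (\<sigma> v))"

text \<open>Motion: minimum number of moved vertices over non-identity automorphisms
  (\<infinity> if the automorphism group is trivial).\<close>
definition motion :: "'a set \<Rightarrow> ('a \<Rightarrow> 'a \<Rightarrow> bool) \<Rightarrow> enat" where
  "motion V E = (INF \<sigma> \<in> {\<sigma>. is_automorphism V E \<sigma> \<and> (\<exists>v\<in>V. \<sigma> v \<noteq> v)}.
                    enat (card {v\<in>V. \<sigma> v \<noteq> v}))"

end

theory Submission
  imports Defs
begin

locale drg =
  fixes V :: "'a set" and E :: "'a \<Rightarrow> 'a \<Rightarrow> bool" and a b c :: "nat \<Rightarrow> nat"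
  assumes DR: "distance_regular_with V E a b c"
begin

definition N where "N w = {u\<in>V. E w u}"

lemma sg: "simple_graph V E" and ne: "V \<noteq> {}" and conn: "connected_graph V E"
  using DR unfolding distance_regular_with_def by auto

lemma fin: "finite V" using sg by (simp add: simple_graph_def)
lemma inV: "E u v \<Longrightarrow> u \<in> V \<and> v \<in> V" using sg by (simp add: simple_graph_def)
lemma sym: "E u v \<Longrightarrow> E v u" using sg by (simp add: simple_graph_def)
lemma irr: "\<not> E u u" using sg by (simp add: simple_graph_def)
lemma finN: "finite (N w)" using fin by (simp add: N_def)

lemma drv: "v \<in> V \<Longrightarrow> w \<in> V \<Longrightarrow>
        card {u\<in>V. E w u \<and> gdist E v u + 1 = gdist E v w} = c (gdist E v w) \<and>
        card {u\<in>V. E w u \<and> gdist E v u = gdist E v w} = a (gdist E v w) \<and>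
        card {u\<in>V. E w u \<and> gdist E v u = gdist E v w + 1} = b (gdist E v w)"
  using DR unfolding distance_regular_with_def Let_def by blast

lemma gdist_refl: "gdist E w w = 0"
  by (simp add: gdist_def)

lemma gdist_one: "E w u \<Longrightarrow> gdist E w u = 1"
  unfolding gdist_def
proof (rule Least_equality)
  assume "E w u" then show "(E ^^ 1) w u" by (metis relpowp_1)
next
  fix m assume "E w u" "(E ^^ m) w u"
  then show "1 \<le> m" using irr by (cases m) auto
qed

lemma gdist_one_imp: "w \<in> V \<Longrightarrow> u \<in> V \<Longrightarrow> gdist E w u = 1 \<Longrightarrow> E w u"
proof -
  assume h: "w \<in> V" "u \<in> V" "gdist E w u = 1"
  then obtain m where "(E ^^ m) w u" using conn unfolding connected_graph_def by blast
  then have "(E ^^ gdist E w u) w u" unfolding gdist_def by (rule LeastI)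
  then show ?thesis using h by (metis relpowp_1)
qed

lemma gdist_two: "w \<noteq> u \<Longrightarrow> \<not> E w u \<Longrightarrow> E w v \<Longrightarrow> E v u \<Longrightarrow> gdist E w u = 2"
  unfolding gdist_def
proof (rule Least_equality)
  assume "E w v" "E v u" then show "(E ^^ 2) w u"
    by (auto simp: numeral_2_eq_2 relcompp_apply)
next
  fix m assume "w \<noteq> u" "\<not> E w u" "(E ^^ m) w u"
  then show "2 \<le> m" by (cases m; cases "m - 1") auto
qed

lemma deg: "w \<in> V \<Longrightarrow> card (N w) = b 0"
proof -
  assume w: "w \<in> V"
  have "{u\<in>V. E w u \<and> gdist E w u = gdist E w w + 1} = N w"
    unfolding N_def gdist_refl using gdist_one gdist_one_imp w by auto
  then show ?thesis using drv[OF w w] by (simp add: gdist_refl)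
qed

lemma adj: "E x y \<Longrightarrow> card (N x \<inter> N y) = a 1"
proof -
  assume e: "E x y"
  then have x: "x \<in> V" and y: "y \<in> V" using inV by auto
  have "{u\<in>V. E y u \<and> gdist E x u = gdist E x y} = N x \<inter> N y"
    unfolding N_def gdist_one[OF e] using gdist_one gdist_one_imp x by auto
  then show ?thesis using drv[OF x y] by (simp add: gdist_one[OF e])
qed

lemma dist2: "x \<in> V \<Longrightarrow> y \<in> V \<Longrightarrow> x \<noteq> y \<Longrightarrow> \<not> E x y \<Longrightarrow> v \<in> N x \<inter> N y
   \<Longrightarrow> card (N x \<inter> N y) = c 2"
proof -
  assume x: "x \<in> V" and y: "y \<in> V" and h: "x \<noteq> y" "\<not> E x y" "v \<in> N x \<inter> N y"
  have g: "gdist E x y = 2" using h by (intro gdist_two[of x y v]) (auto simp: N_def intro: sym)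
  have "{u\<in>V. E y u \<and> gdist E x u + 1 = gdist E x y} = N x \<inter> N y"
    unfolding N_def g using gdist_one gdist_one_imp x by auto
  then show ?thesis using drv[OF x y] by (simp add: g)
qed

lemma walk: "(E ^^ m) x0 w \<Longrightarrow> (\<And>u v w. E u v \<Longrightarrow> E v w \<Longrightarrow> u \<noteq> w \<Longrightarrow> E u w)
   \<Longrightarrow> w = x0 \<or> E x0 w"
proof (induction m arbitrary: w)
  case 0 then show ?case by simp
next
  case (Suc m)
  then obtain v where "(E ^^ m) x0 v" "E v w" by auto
  with Suc show ?case by (metis sym)
qed

lemma complete_bad:
  assumes diam: "diameter V E \<ge> 2"
    and tr: "\<And>u v w. E u v \<Longrightarrow> E v w \<Longrightarrow> u \<noteq> w \<Longrightarrow> E u w"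
  shows False
proof -
  have le: "gdist E u v \<le> 1" if uV: "u \<in> V" and vV: "v \<in> V" for u v
  proof -
    obtain m where m: "(E ^^ m) u v" using conn[unfolded connected_graph_def, rule_format, OF uV vV] by (elim exE)
    have "v = u \<or> E u v" by (rule walk[OF m tr])
    then show ?thesis
    proof
      assume "v = u" then show ?thesis using gdist_refl by simp
    next
      assume "E u v" then show ?thesis using gdist_one by simp
    qed
  qed
  define S where "S = {gdist E u v | u v. u \<in> V \<and> v \<in> V}"
  have fs: "finite S"
  proof (rule finite_subset)
    show "S \<subseteq> (\<lambda>p. gdist E (fst p) (snd p)) ` (V \<times> V)"
    proof
      fix d assume "d \<in> S"
      then obtain u v where "d = gdist E u v" "u \<in> V" "v \<in> V" unfolding S_def by blast
      then show "d \<in> (\<lambda>p. gdist E (fst p) (snd p)) ` (V \<times> V)"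
        by (intro image_eqI[of _ _ "(u,v)"]) auto
    qed
    show "finite ((\<lambda>p. gdist E (fst p) (snd p)) ` (V \<times> V))" using fin by simp
  qed
  obtain x where x: "x \<in> V" using ne by auto
  have "gdist E x x \<in> S" unfolding S_def using x by blast
  then have nes: "S \<noteq> {}" by blast
  have all: "d \<le> 1" if "d \<in> S" for d
  proof -
    obtain u v where "d = gdist E u v" "u \<in> V" "v \<in> V" using \<open>d \<in> S\<close> unfolding S_def by blast
    then show ?thesis using le by simp
  qed
  have "Max S \<le> 1" by (rule Max.boundedI[OF fs nes all])
  then have "diameter V E \<le> 1" unfolding diameter_def S_def .
  then show False using diam by simp
qed

lemma moved:
  assumes aut: "is_automorphism V E \<sigma>" and x: "x \<in> V"
  shows "(N x - N (\<sigma> x)) \<union> (N (\<sigma> x) - N x) \<subseteq> {v\<in>V. \<sigma> v \<noteq> v}"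
proof
  fix u assume u: "u \<in> (N x - N (\<sigma> x)) \<union> (N (\<sigma> x) - N x)"
  then have uV: "u \<in> V" by (auto simp: N_def)
  have "E x u \<longleftrightarrow> E (\<sigma> x) (\<sigma> u)" using aut x uV unfolding is_automorphism_def by blast
  then show "u \<in> {v\<in>V. \<sigma> v \<noteq> v}" using u uV by (auto simp: N_def)
qed

lemma Nsub: "N x \<inter> N y \<subseteq> N y" by auto

lemma adj_bound:
  assumes e: "E x y" and diam: "diameter V E \<ge> 2"
  shows "2 * a 1 + 3 \<le> b 0 + c 2"
proof -
  have x: "x \<in> V" and y: "y \<in> V" using inV e by auto
  have kx: "card (N x) = b 0" and ky: "card (N y) = b 0" using deg x y by auto
  have a1: "card (N x \<inter> N y) = a 1" using adj e by simp
  show ?thesis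
  proof (cases "\<exists>z\<in>N y. z \<noteq> x \<and> \<not> E x z")
    case True
    then obtain z where z: "z \<in> N y" "z \<noteq> x" "\<not> E x z" by auto
    have eyz: "E y z" using z by (auto simp: N_def)
    have zV: "z \<in> V" using z by (auto simp: N_def)
    have ayz: "card (N y \<inter> N z) = a 1" using adj eyz by simp
    have yA: "y \<in> N x \<inter> N z" using e eyz x zV y by (auto simp: N_def intro: sym)
    have cxz: "card (N x \<inter> N z) = c 2" using dist2[OF x zV z(2)[symmetric] z(3) yA] .
    have xB: "x \<in> N y - N x" using e x y irr by (auto simp: N_def intro: sym)
    have zB: "z \<in> N y - N x" using z zV by (auto simp: N_def)
    have sub: "N y \<inter> N z \<subseteq> (N x \<inter> N z - {y}) \<union> (N y - N x - {x, z})"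
      using irr z(3) by (auto simp: N_def dest: sym)
    have fU: "finite ((N x \<inter> N z - {y}) \<union> (N y - N x - {x, z}))" by (simp add: finN)
    have "card (N y \<inter> N z) \<le> card ((N x \<inter> N z - {y}) \<union> (N y - N x - {x, z}))"
      by (rule card_mono[OF fU sub])
    also have "\<dots> \<le> card (N x \<inter> N z - {y}) + card (N y - N x - {x, z})" by (rule card_Un_le)
    finally have "a 1 \<le> card (N x \<inter> N z - {y}) + card (N y - N x - {x, z})" using ayz by simp
    moreover have "card (N x \<inter> N z - {y}) = c 2 - 1" using yA cxz finN by simp
    moreover have "card (N y - N x - {x, z}) = card (N y - N x) - 2"
      using xB zB z(2) finN by (simp add: card_Diff_subset)
    moreover have "card (N y - N x) = b 0 - a 1"
      using card_Diff_subset_Int[of "N y" "N x"] finN ky a1 by (simp add: Int_commute)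
    moreover have "card (N x \<inter> N z) \<ge> 1"
    proof -
      have "card (N x \<inter> N z) > 0" using yA by (subst card_gt_0_iff) (auto simp: finN)
      then show ?thesis by simp
    qed
    moreover have "card (N y - N x) \<ge> 2"
    proof -
      have "{x, z} \<subseteq> N y - N x" using xB zB by auto
      then show ?thesis using card_mono[of "N y - N x" "{x,z}"] finN z(2) by simp
    qed
    ultimately show ?thesis using cxz by linarith
  next
    case False
    have sub2: "N y \<subseteq> insert x (N x \<inter> N y)" using False by (auto simp: N_def)
    have fI: "finite (insert x (N x \<inter> N y))" by (simp add: finN)
    have "card (N y) \<le> card (insert x (N x \<inter> N y))" by (rule card_mono[OF fI sub2])
    also have "\<dots> \<le> Suc (card (N x \<inter> N y))" by (simp add: card_insert_if finN)
    finally have h1: "b 0 \<le> a 1 + 1" using ky a1 by simp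
    have xNy: "x \<in> N y" using e x by (auto simp: N_def intro: sym)
    have sub3: "N x \<inter> N y \<subseteq> N y - {x}" using irr by (auto simp: N_def)
    have "card (N x \<inter> N y) \<le> card (N y - {x})" by (rule card_mono[OF _ sub3]) (simp add: finN)
    also have "\<dots> = card (N y) - 1" using xNy finN by simp
    finally have h2: "a 1 \<le> b 0 - 1" using ky a1 by simp
    have "card (N y) > 0" using xNy by (subst card_gt_0_iff) (auto simp: finN)
    then have h3: "b 0 \<ge> 1" using ky by simp
    have a1k: "a 1 = b 0 - 1" using h1 h2 h3 by linarith
    have tr: "E u w" if h: "E u v" "E v w" "u \<noteq> w" for u v w
    proof -
      have uV: "u \<in> V" and vV: "v \<in> V" and wV: "w \<in> V" using inV h by auto
      have s1: "N u \<inter> N v \<subseteq> N v - {u}" using irr by (auto simp: N_def)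
      have "card (N v - {u}) = b 0 - 1" using deg vV h uV by (simp add: N_def sym)
      moreover have "card (N u \<inter> N v) = a 1" using adj h by simp
      ultimately have "N u \<inter> N v = N v - {u}" using card_subset_eq[OF _ s1] finN a1k by simp
      moreover have "w \<in> N v - {u}" using h wV by (auto simp: N_def)
      ultimately show "E u w" by (auto simp: N_def)
    qed
    then show ?thesis using complete_bad[OF diam] by blast
  qed
qed

lemma common_bound:
  assumes x: "x \<in> V" and y: "y \<in> V" and xy: "x \<noteq> y" and diam: "diameter V E \<ge> 2"
    and d: "\<delta> > 0" and c2: "real (c 2) \<le> (1 - \<delta>) * real (b 0)"
  shows "2 * real (card (N x \<inter> N y)) \<le> 2 * real (b 0) - \<delta> * real (b 0)"
proof -
  have e: "(1 - \<delta>) * real (b 0) = real (b 0) - \<delta> * real (b 0)" by (simp add: left_diff_distrib)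
  have c0: "real (c 2) \<ge> 0" by simp
  have dk0: "\<delta> * real (b 0) \<ge> 0" using mult_nonneg_nonneg[OF less_imp_le[OF d] of_nat_0_le_iff] .
  show ?thesis
  proof (cases "E x y")
    case True
    then have h1: "card (N x \<inter> N y) = a 1" using adj by simp
    have "2 * a 1 + 3 \<le> b 0 + c 2" using adj_bound[OF True diam] .
    then have "real (2 * a 1 + 3) \<le> real (b 0 + c 2)" by (simp only: of_nat_le_iff)
    then have "2 * real (a 1) + 3 \<le> real (b 0) + real (c 2)" by simp
    then show ?thesis using c2 e h1 by linarith
  next
    case False
    show ?thesis
    proof (cases "N x \<inter> N y = {}")
      case True then show ?thesis using c2 e c0 by simp
    next
      case ne: False
      then obtain v where "v \<in> N x \<inter> N y" by auto
      then have "card (N x \<inter> N y) = c 2" using dist2[OF x y xy False] by simp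
      then show ?thesis using c2 e dk0 by linarith
    qed
  qed
qed

lemma moved_card:
  assumes aut: "is_automorphism V E \<sigma>" and x: "x \<in> V" and mv: "\<sigma> x \<noteq> x"
    and diam: "diameter V E \<ge> 2"
    and d: "\<delta> > 0" and c2: "real (c 2) \<le> (1 - \<delta>) * real (b 0)"
  shows "\<delta> * real (b 0) \<le> real (card {v\<in>V. \<sigma> v \<noteq> v})"
proof -
  define y where "y = \<sigma> x"
  have y: "y \<in> V" using aut x unfolding is_automorphism_def bij_betw_def y_def by auto
  have cb: "2 * real (card (N x \<inter> N y)) \<le> 2 * real (b 0) - \<delta> * real (b 0)"
    using common_bound[OF x y _ diam d c2] mv y_def by auto
  have c1: "card (N x - N y) = b 0 - card (N x \<inter> N y)"
    using card_Diff_subset_Int[of "N x" "N y"] finN deg x by simp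
  have c3: "card (N y - N x) = b 0 - card (N x \<inter> N y)"
    using card_Diff_subset_Int[of "N y" "N x"] finN deg y by (simp add: Int_commute)
  have le: "card (N x \<inter> N y) \<le> b 0" using card_mono[OF finN Int_lower1] deg x by metis
  have "card ((N x - N y) \<union> (N y - N x)) = card (N x - N y) + card (N y - N x)"
    by (rule card_Un_disjoint) (use finN in auto)
  moreover have "card ((N x - N y) \<union> (N y - N x)) \<le> card {v\<in>V. \<sigma> v \<noteq> v}"
    using card_mono[OF _ moved[OF aut x]] fin y_def by simp
  ultimately have "2 * (b 0 - card (N x \<inter> N y)) \<le> card {v\<in>V. \<sigma> v \<noteq> v}" using c1 c3 by simp
  then have "2 * (real (b 0) - real (card (N x \<inter> N y))) \<le> real (card {v\<in>V. \<sigma> v \<noteq> v})"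
    using le by (simp add: of_nat_diff)
  then show ?thesis using cb by (simp add: algebra_simps)
qed

end

theorem corollary4p3:
  fixes V :: "'a set" and E :: "'a \<Rightarrow> 'a \<Rightarrow> bool"
    and a b c :: "nat \<Rightarrow> nat" and \<gamma> \<delta> :: real
  assumes "distance_regular_with V E a b c"
    and "diameter V E \<ge> 2"
    and "\<gamma> > 0" and "\<delta> > 0"
    and "real (b 0) > \<gamma> * real (card V)"
    and "real (c 2) \<le> (1 - \<delta>) * real (b 0)"
  shows "motion V E \<ge> enat (nat \<lceil>\<gamma> * \<delta> * real (card V)\<rceil>)"
proof -
  interpret drg V E a b c using assms(1) by unfold_locales
  have lt: "\<gamma> * \<delta> * real (card V) \<le> \<delta> * real (b 0)"
    using assms(4,5) by (simp add: mult.commute mult.left_commute less_imp_le)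
  show ?thesis unfolding motion_def
  proof (rule INF_greatest)
    fix \<sigma> assume "\<sigma> \<in> {\<sigma>. is_automorphism V E \<sigma> \<and> (\<exists>v\<in>V. \<sigma> v \<noteq> v)}"
    then obtain x where aut: "is_automorphism V E \<sigma>" and x: "x \<in> V" "\<sigma> x \<noteq> x" by auto
    have "\<gamma> * \<delta> * real (card V) \<le> real (card {v\<in>V. \<sigma> v \<noteq> v})"
      using moved_card[OF aut x assms(2,4,6)] lt by linarith
    then show "enat (nat \<lceil>\<gamma> * \<delta> * real (card V)\<rceil>) \<le> enat (card {v\<in>V. \<sigma> v \<noteq> v})"
      by (simp add: nat_ceiling_le_eq)
  qed
qed

end
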